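(* Let $\mathcal{I},\mathcal{J}$ be ideals on $\omega$ with $\mathcal{J}\le_{\mathrm{KB}}\mathcal{I}$. If Player II has a winning strategy in the tallness game with respect to $\mathcal{J}$, then Player II has a winning strategy in the tallness game with respect to $\mathcal{I}$.
   Context: Ideals on $\omega$ are assumed to contain all finite sets. For ideals $\mathcal{J}$ on $X$ and $\mathcal{I}$ on $Y$, $\mathcal{J}\le_{\mathrm{KB}}\mathcal{I}$ means there is a finite-to-one function $f:Y\to X$ with $f^{-1}(J)\in\mathcal{I}$ for every $J\in\mathcal{J}$. For an ideal $\mathcal{I}$ on $\omega$, the tallness game with respect to $\mathcal{I}$: at round $k$, Player I plays $n_k\in\omega$ with $n_0<n_1<\cdots$ and then Player II plays $i_k\in\{0,1\}$. Player II wins iff $\{n_k: i_k=1\}$ is infinite and belongs to $\mathcal{I}$. *)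

theory Defs
  imports Main
begin

definition is_ideal :: "nat set set \<Rightarrow> bool" where
  "is_ideal I \<longleftrightarrow>
     (\<forall>A. finite A \<longrightarrow> A \<in> I) \<and>
     (\<forall>A B. A \<in> I \<longrightarrow> B \<subseteq> A \<longrightarrow> B \<in> I) \<and>
     (\<forall>A B. A \<in> I \<longrightarrow> B \<in> I \<longrightarrow> A \<union> B \<in> I) \<and>
     UNIV \<notin> I"

definition finite_to_one :: "(nat \<Rightarrow> nat) \<Rightarrow> bool" where
  "finite_to_one f \<longleftrightarrow> (\<forall>x. finite (f -` {x}))"

definition KB_le :: "nat set set \<Rightarrow> nat set set \<Rightarrow> bool" where
  "KB_le J I \<longleftrightarrow> (\<exists>f. finite_to_one f \<and> (\<forall>A\<in>J. f -` A \<in> I))"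

text \<open>A strategy for Player II maps the list [n_0,...,n_k] of Player I's moves so
  far to Player II's answer i_k (True = 1, False = 0). Player II's own earlier
  moves are determined by the strategy, so this loses no generality.\<close>
definition tall_game_II_wins :: "nat set set \<Rightarrow> (nat list \<Rightarrow> bool) \<Rightarrow> bool" where
  "tall_game_II_wins I \<sigma> \<longleftrightarrow>
     (\<forall>n :: nat \<Rightarrow> nat. strict_mono n \<longrightarrow>
        (let W = {n k | k. \<sigma> (map n [0..<Suc k])} in infinite W \<and> W \<in> I))"

definition II_has_winning_strategy :: "nat set set \<Rightarrow> bool" where
  "II_has_winning_strategy I \<longleftrightarrow> (\<exists>\<sigma>. tall_game_II_wins I \<sigma>)"

end

theory Submission
  imports Defs "HOL-Library.Infinite_Set"
begin

definition isrec :: "(nat\<Rightarrow>nat) \<Rightarrow> nat list \<Rightarrow> nat \<Rightarrow> bool" where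
  "isrec f xs i = (\<forall>i'<i. f (xs!i') < f (xs!i))"

definition recs :: "(nat\<Rightarrow>nat) \<Rightarrow> nat list \<Rightarrow> nat list" where
  "recs f xs = map (\<lambda>i. f (xs!i)) (filter (isrec f xs) [0..<length xs])"

definition tau :: "(nat\<Rightarrow>nat) \<Rightarrow> (nat list \<Rightarrow> bool) \<Rightarrow> nat list \<Rightarrow> bool" where
  "tau f \<sigma> xs = (xs \<noteq> [] \<and> isrec f xs (length xs - 1) \<and> \<sigma> (recs f xs))"

lemma filter_enum:
  fixes e :: "nat \<Rightarrow> nat"
  assumes "strict_mono e" "{i. R i} = range e"
  shows "filter R [0..<Suc (e j)] = map e [0..<Suc j]"
proof (rule sorted_distinct_set_unique)
  show "sorted (filter R [0..<Suc (e j)])" by (rule sorted_wrt_filter) (simp del: upt_Suc)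
  show "distinct (filter R [0..<Suc (e j)])" by simp
  show "sorted (map e [0..<Suc j])"
    unfolding sorted_map
    by (rule sorted_wrt_mono_rel[OF _ sorted_wrt_upt])
      (use assms(1) in \<open>auto simp: strict_mono_less_eq\<close>)
  show "distinct (map e [0..<Suc j])"
    using assms(1) by (auto simp: distinct_map intro: inj_on_subset[OF strict_mono_imp_inj_on] dest: strict_monoD)
  show "set (filter R [0..<Suc (e j)]) = set (map e [0..<Suc j])"
  proof
    show "set (filter R [0..<Suc (e j)]) \<subseteq> set (map e [0..<Suc j])"
    proof
      fix x assume "x \<in> set (filter R [0..<Suc (e j)])"
      then have "R x" "x \<le> e j" by (auto simp del: upt_Suc)
      then obtain j' where "x = e j'" using assms(2) by blast
      with \<open>x \<le> e j\<close> have "j' \<le> j" using assms(1) by (simp add: strict_mono_less_eq)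
      then show "x \<in> set (map e [0..<Suc j])" using \<open>x = e j'\<close> by (auto simp del: upt_Suc)
    qed
    show "set (map e [0..<Suc j]) \<subseteq> set (filter R [0..<Suc (e j)])"
    proof
      fix x assume "x \<in> set (map e [0..<Suc j])"
      then obtain j' where "j' < Suc j" "x = e j'" by (auto simp del: upt_Suc)
      then have "x \<le> e j" "R x" using assms by (auto simp: strict_mono_less_eq less_Suc_eq_le)
      then show "x \<in> set (filter R [0..<Suc (e j)])" by (auto simp del: upt_Suc)
    qed
  qed
qed

theorem mainTheorem12:
  assumes "is_ideal I" and "is_ideal J"
    and "KB_le J I"
    and "II_has_winning_strategy J"
  shows "II_has_winning_strategy I"
proof -
  obtain f where fto: "finite_to_one f" and fJ: "\<forall>A\<in>J. f -` A \<in> I"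
    using assms(3) unfolding KB_le_def by blast
  obtain \<sigma> where \<sigma>: "tall_game_II_wins J \<sigma>"
    using assms(4) unfolding II_has_winning_strategy_def by blast
  have "tall_game_II_wins I (tau f \<sigma>)"
    unfolding tall_game_II_wins_def Let_def
  proof (intro allI impI)
    fix n :: "nat \<Rightarrow> nat" assume n: "strict_mono n"
    define R where "R i = (\<forall>i'<i. f (n i') < f (n i))" for i
    define xs where "xs k = map n [0..<Suc k]" for k
    have xsnth: "i < Suc k \<Longrightarrow> xs k ! i = n i" for i k
      unfolding xs_def by (simp del: upt_Suc)
    have isrecR: "i < Suc k \<Longrightarrow> isrec f (xs k) i = R i" for i k
      unfolding isrec_def R_def using xsnth by auto
    have lenxs: "length (xs k) = Suc k" for k unfolding xs_def by simp
    have infR: "infinite {i. R i}"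
    proof
      assume fin: "finite {i. R i}"
      obtain B where B: "\<And>i. R i \<Longrightarrow> i \<le> B"
        using finite_nat_set_iff_bounded_le[THEN iffD1, OF fin] by auto
      define M where "M = Max ((f \<circ> n) ` {0..B})"
      have fin2: "finite (n -` (f -` {0..M}))"
      proof (rule finite_vimageI)
        have "f -` {0..M} = (\<Union>x\<in>{0..M}. f -` {x})" by auto
        then show "finite (f -` {0..M})" using fto unfolding finite_to_one_def by auto
        show "inj n" using n strict_mono_imp_inj_on by blast
      qed
      then obtain i where "i \<notin> n -` (f -` {0..M})"
        using ex_new_if_finite[OF infinite_UNIV_nat] by blast
      then have ex: "\<exists>i. f (n i) > M" by (auto simp: not_le)
      define i0 where "i0 = (LEAST i. f (n i) > M)"
      have i0: "f (n i0) > M" unfolding i0_def using ex by (rule LeastI_ex)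
      have lt: "i' < i0 \<Longrightarrow> f (n i') \<le> M" for i'
        unfolding i0_def using not_less_Least by fastforce
      have "R i0" unfolding R_def using lt i0 by (blast intro: le_less_trans)
      then have "i0 \<le> B" by (rule B)
      then have "f (n i0) \<le> M" unfolding M_def by (intro Max_ge) auto
      with i0 show False by simp
    qed
    define e where "e = enumerate {i. R i}"
    have emono: "strict_mono e" unfolding e_def using infR
      by (simp add: strict_mono_def enumerate_mono)
    have erange: "{i. R i} = range e"
      unfolding e_def using infR enumerate_in_set[OF infR] enumerate_Ex[OF infR]
      by blast
    have Re: "R (e j)" for j using erange by auto
    define m where "m j = f (n (e j))" for j
    have mmono: "strict_mono m"
      unfolding strict_mono_def m_def using Re emono R_def
      by (metis strict_mono_def)
    have key: "tau f \<sigma> (xs k) = (R k \<and> (\<forall>j. k = e j \<longrightarrow> \<sigma> (map m [0..<Suc j])))" for k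
    proof (cases "R k")
      case False
      then show ?thesis unfolding tau_def using isrecR lenxs by simp
    next
      case True
      then obtain j where kj: "k = e j" using erange by auto
      have "filter (isrec f (xs k)) [0..<length (xs k)] = filter R [0..<Suc k]"
        unfolding lenxs by (rule filter_cong) (auto simp: isrecR simp del: upt_Suc)
      also have "\<dots> = map e [0..<Suc j]" unfolding kj by (rule filter_enum[OF emono erange])
      finally have "recs f (xs k) = map m [0..<Suc j]"
        unfolding recs_def m_def using kj emono
        by (auto simp: xsnth strict_mono_less_eq less_Suc_eq_le simp del: upt_Suc)
      moreover have "\<forall>j'. k = e j' \<longrightarrow> j' = j" using kj emono
        by (metis injD strict_mono_imp_inj_on)
      moreover have "xs k \<noteq> []" using lenxs[of k] by auto
      moreover have "isrec f (xs k) (length (xs k) - 1)" using isrecR[of k k] True lenxs[of k] by simp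
      ultimately have "tau f \<sigma> (xs k) = \<sigma> (map m [0..<Suc j])"
        unfolding tau_def by (simp only: simp_thms)
      then show ?thesis using True \<open>\<forall>j'. k = e j' \<longrightarrow> j' = j\<close> kj by blast
    qed
    define WJ where "WJ = {m j | j. \<sigma> (map m [0..<Suc j])}"
    have WJ: "infinite WJ \<and> WJ \<in> J"
      using \<sigma>[unfolded tall_game_II_wins_def, rule_format, OF mmono]
      unfolding WJ_def Let_def .
    define WI where "WI = {n k | k. tau f \<sigma> (map n [0..<Suc k])}"
    have WIeq: "WI = {n (e j) | j. \<sigma> (map m [0..<Suc j])}"
    proof (rule set_eqI)
      fix x
      show "x \<in> WI \<longleftrightarrow> x \<in> {n (e j) | j. \<sigma> (map m [0..<Suc j])}"
      proof
        assume "x \<in> WI"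
        then obtain k where k: "x = n k" "tau f \<sigma> (xs k)" unfolding WI_def xs_def by blast
        then have "R k" "\<forall>j. k = e j \<longrightarrow> \<sigma> (map m [0..<Suc j])" using key by blast+
        then obtain j where "k = e j" "\<sigma> (map m [0..<Suc j])" using erange by blast
        then show "x \<in> {n (e j) | j. \<sigma> (map m [0..<Suc j])}" using k by blast
      next
        assume "x \<in> {n (e j) | j. \<sigma> (map m [0..<Suc j])}"
        then obtain j where j: "x = n (e j)" "\<sigma> (map m [0..<Suc j])" by blast
        have "\<forall>j'. e j = e j' \<longrightarrow> j' = j" using emono
          by (metis injD strict_mono_imp_inj_on)
        then have "tau f \<sigma> (xs (e j))" using key[of "e j"] Re[of j] j(2) by metis
        then show "x \<in> WI" unfolding WI_def xs_def using j(1) by blast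
      qed
    qed
    have "WI \<subseteq> f -` WJ" unfolding WIeq WJ_def m_def by auto
    moreover have "f -` WJ \<in> I" using fJ WJ by blast
    ultimately have "WI \<in> I" using assms(1) unfolding is_ideal_def by blast
    moreover have "WJ \<subseteq> f ` WI" unfolding WIeq WJ_def m_def by auto
    then have "infinite WI" using WJ finite_surj by blast
    ultimately show "infinite WI \<and> WI \<in> I" by blast
  qed
  then show ?thesis unfolding II_has_winning_strategy_def by blast
qed

end
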